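(* Let $\alpha>0$ and let $X_\alpha:\mathbb{C}\cong\mathbb{R}^2\to\mathrm{Nil}_3$ be the map defined in the context (with $\theta=\tilde\theta_\alpha$). Then $X_\alpha$ is simply periodic: there exists $Z\in\mathbb{C}\setminus\{0\}$ such that $X_\alpha(z+Z)=X_\alpha(z)$ for all $z\in\mathbb{C}$.
   Context: $\mathrm{Nil}_3$ is $\mathbb{R}^3$ with the metric $dx_1^2+dx_2^2+\big(dx_3+\tfrac12(x_2dx_1-x_1dx_2)\big)^2$. For $\alpha>0$ and $\theta\in\mathbb{R}$ set $C_{\alpha,\theta}=\frac{\sin(2\theta)}{2\alpha}$ and $P_{\alpha,\theta}(x)=\alpha^2+\cos(2\theta)x^2-C_{\alpha,\theta}^2x^4$. Let $\theta^+_\alpha=\pi/2$ if $\alpha>1$, and $\theta^+_\alpha=\frac12\arccos(1-2\alpha^2)$ if $\alpha\le1$. Let $$L(\alpha,\theta)=\int_{-1}^1\frac{2\alpha C_{\alpha,\theta}^2x^2-\alpha\cos(2\theta)+C_{\alpha,\theta}^2x^2\sqrt{P_{\alpha,\theta}(x)}}{\sqrt{(1-x^2)P_{\alpha,\theta}(x)}(\alpha+\sqrt{P_{\alpha,\theta}(x)})}dx.$$ Let $\theta=\tilde\theta_\alpha$ be the unique $\theta\in(0,\theta^+_\alpha)\cap(0,\pi/4)$ with $L(\alpha,\theta)=0$, and $C=C_{\alpha,\theta}$. Let $\varphi$ solve $\varphi'^2=P_{\alpha,\theta}(\cos\varphi)$ with $\varphi(0)=0$ and $\varphi'(0)\le0$.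 Define $\beta'=C\cos^2\varphi$ with $\beta(0)=0$, and $G'=\frac{C^2\cos^2\varphi-\cos 2\theta}{\alpha-\varphi'}$ with $G(0)=0$. Put $A=\alpha v+\beta(u)$. Then $X_\alpha(u+iv)=(x_1,x_2,x_3)$ with $x_1=\frac{G'}{\alpha}\cos\varphi\sinh A-\frac C\alpha\sin\varphi\cosh A$, $x_2=Cv-G$, $x_3=-\frac{x_1x_2}2+\frac C\alpha(\frac{G'}{\alpha}-1)\cos\varphi\cosh A-\frac1\alpha(\frac{C^2}\alpha+G')\sin\varphi\sinh A$, where $\varphi,G,G'$ are evaluated at $u$. *)

theory Defs
  imports "HOL-Analysis.Analysis"
begin

definition Cc :: "real \<Rightarrow> real \<Rightarrow> real" where
  "Cc \<alpha> \<theta> = sin (2 * \<theta>) / (2 * \<alpha>)"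

definition Pp :: "real \<Rightarrow> real \<Rightarrow> real \<Rightarrow> real" where
  "Pp \<alpha> \<theta> x = \<alpha>^2 + cos (2 * \<theta>) * x^2 - (Cc \<alpha> \<theta>)^2 * x^4"

definition theta_plus :: "real \<Rightarrow> real" where
  "theta_plus \<alpha> = (if \<alpha> > 1 then pi / 2 else arccos (1 - 2 * \<alpha>^2) / 2)"

definition Lfun :: "real \<Rightarrow> real \<Rightarrow> real" where
  "Lfun \<alpha> \<theta> = integral {-1..1} (\<lambda>x.
     (2 * \<alpha> * (Cc \<alpha> \<theta>)^2 * x^2 - \<alpha> * cos (2 * \<theta>)
       + (Cc \<alpha> \<theta>)^2 * x^2 * sqrt (Pp \<alpha> \<theta> x))
     / (sqrt ((1 - x^2) * Pp \<alpha> \<theta> x) * (\<alpha> + sqrt (Pp \<alpha> \<theta> x))))"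

definition Gprime :: "real \<Rightarrow> real \<Rightarrow> (real \<Rightarrow> real) \<Rightarrow> (real \<Rightarrow> real) \<Rightarrow> real \<Rightarrow> real" where
  "Gprime \<alpha> \<theta> \<phi> \<phi>' u =
     ((Cc \<alpha> \<theta>)^2 * (cos (\<phi> u))^2 - cos (2 * \<theta>)) / (\<alpha> - \<phi>' u)"

definition Xmap :: "real \<Rightarrow> real \<Rightarrow> (real \<Rightarrow> real) \<Rightarrow> (real \<Rightarrow> real) \<Rightarrow> (real \<Rightarrow> real)
     \<Rightarrow> (real \<Rightarrow> real) \<Rightarrow> complex \<Rightarrow> real \<times> real \<times> real" where
  "Xmap \<alpha> \<theta> \<phi> \<phi>' \<beta> G z =
    (let u = Re z; v = Im z; C = Cc \<alpha> \<theta>; Gp = Gprime \<alpha> \<theta> \<phi> \<phi>' u;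
         A = \<alpha> * v + \<beta> u;
         x1 = Gp / \<alpha> * cos (\<phi> u) * sinh A - C / \<alpha> * sin (\<phi> u) * cosh A;
         x2 = C * v - G u;
         x3 = - (x1 * x2) / 2 + C / \<alpha> * (Gp / \<alpha> - 1) * cos (\<phi> u) * cosh A
              - 1 / \<alpha> * (C^2 / \<alpha> + Gp) * sin (\<phi> u) * sinh A
     in (x1, x2, x3))"

end

theory Submission
  imports Defs
begin

lemma deriv_sign_right:
  fixes f f' :: "real \<Rightarrow> real"
  assumes der: "\<And>x. (f has_real_derivative f' x) (at x)" and nz: "\<And>x. f' x \<noteq> 0"
    and fa: "f' a < 0" and ab: "a < b"
  shows "f' b < 0"
proof (rule ccontr)
  assume "\<not> f' b < 0"
  with nz have fb: "f' b > 0" by (metis linorder_neqE_linordered_idom)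
  have cont: "continuous_on {a..b} f"
    by (meson DERIV_continuous continuous_at_imp_continuous_on der)
  obtain m where m: "m \<in> {a..b}" and mmin: "\<forall>y\<in>{a..b}. f m \<le> f y"
    using continuous_attains_inf[OF compact_Icc _ cont] ab by auto
  obtain d1 where d1: "d1 > 0" "\<forall>h>0. h < d1 \<longrightarrow> f a > f (a + h)"
    using DERIV_neg_dec_right[OF der fa] by blast
  obtain d2 where d2: "d2 > 0" "\<forall>h>0. h < d2 \<longrightarrow> f (b - h) < f b"
    using DERIV_pos_inc_left[OF der fb] by blast
  have "m \<noteq> a"
  proof
    assume "m = a"
    define h where "h = min d1 (b - a) / 2"
    have hf: "h > 0" "h < d1" "h \<le> (b - a)/2" using d1 ab by (auto simp: h_def)
    then have "a + h \<in> {a..b}" by auto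
    then have "f a \<le> f (a + h)" using mmin \<open>m = a\<close> by blast
    then show False using d1 hf by force
  qed
  moreover have "m \<noteq> b"
  proof
    assume "m = b"
    define h where "h = min d2 (b - a) / 2"
    have hf: "h > 0" "h < d2" "h \<le> (b - a)/2" using d2 ab by (auto simp: h_def)
    then have "b - h \<in> {a..b}" by auto
    then have "f b \<le> f (b - h)" using mmin \<open>m = b\<close> by blast
    then show False using d2 hf by force
  qed
  ultimately have am: "a < m" "m < b" using m by auto
  have "f' m = 0"
  proof (rule DERIV_local_min[OF der])
    show "0 < min (m - a) (b - m)" using am by auto
    show "\<forall>y. \<bar>m - y\<bar> < min (m - a) (b - m) \<longrightarrow> f m \<le> f y"
    proof (intro allI impI)
      fix y assume "\<bar>m - y\<bar> < min (m - a) (b - m)"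
      then have "y \<in> {a..b}" by (auto simp: abs_less_iff)
      then show "f m \<le> f y" using mmin by blast
    qed
  qed
  with nz show False by blast
qed

lemma deriv_sign_left:
  fixes f f' :: "real \<Rightarrow> real"
  assumes der: "\<And>x. (f has_real_derivative f' x) (at x)" and nz: "\<And>x. f' x \<noteq> 0"
    and fa: "f' a < 0" and ab: "b < a"
  shows "f' b < 0"
proof -
  have der2: "((\<lambda>x. - f (- x)) has_real_derivative f' (- x)) (at x)" for x
    using DERIV_minus[OF iffD1[OF DERIV_mirror der[of "-x"]]] by simp
  have "f' (- (- b)) < 0"
    by (rule deriv_sign_right[where f="\<lambda>x. - f (- x)" and f'="\<lambda>x. f' (- x)" and a="-a"])
       (use der2 nz fa ab in auto)
  then show ?thesis by simp
qed

lemma exists_antideriv: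
  fixes h :: "real \<Rightarrow> real"
  assumes "continuous_on UNIV h"
  shows "\<exists>I. \<forall>y. (I has_real_derivative h y) (at y)"
proof -
  define I where "I y = integral {0..y} h - integral {y..0} h" for y
  have "(I has_real_derivative h x) (at x)" for x
  proof -
    define a where "a = min x 0 - 1"
    define b where "b = max x 0 + 1"
    have ch: "continuous_on {a..b} h" using assms continuous_on_subset by blast
    have hint: "h integrable_on {u..v}" for u v
      using assms continuous_on_subset integrable_continuous_real by blast
    have eq: "integral {a..y} h - integral {a..0} h = I y" if "y \<in> {a<..<b}" for y
    proof (cases "y \<ge> 0")
      case True
      have "integral {a..0} h + integral {0..y} h = integral {a..y} h"
        using True a_def by (intro Henstock_Kurzweil_Integration.integral_combine[OF _ _ hint]) auto
      moreover have "integral {y..0} h = 0"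
        using True by (cases "y = 0") auto
      ultimately show ?thesis by (simp add: I_def)
    next
      case False
      have "integral {a..y} h + integral {y..0} h = integral {a..0} h"
        using False that a_def by (intro Henstock_Kurzweil_Integration.integral_combine[OF _ _ hint]) auto
      moreover have "integral {0..y} h = 0" using False by auto
      ultimately show ?thesis by (simp add: I_def)
    qed
    have xin: "x \<in> {a<..<b}" by (auto simp: a_def b_def)
    have "((\<lambda>y. integral {a..y} h) has_real_derivative h x) (at x within {a..b})"
      using xin by (intro integral_has_real_derivative ch) auto
    moreover have "at x within {a..b} = at x"
      using xin by (intro at_within_interior) auto
    ultimately have "((\<lambda>y. integral {a..y} h - integral {a..0} h) has_real_derivative h x) (at x)"
      by (auto intro!: derivative_eq_intros)
    then show ?thesis
      by (rule has_field_derivative_transform_within_open[OF _ open_greaterThanLessThan xin]) (use eq in auto)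
  qed
  then show ?thesis by blast
qed

lemma periodic_incr:
  fixes I h :: "real \<Rightarrow> real"
  assumes der: "\<And>y. (I has_real_derivative h y) (at y)" and per: "\<And>y. h (y + 2*pi) = h y"
  shows "I (y + 2*pi) - I y = I (2*pi) - I 0"
proof -
  have "\<forall>x. ((\<lambda>y. I (y + 2*pi) - I y) has_real_derivative 0) (at x)"
  proof
    fix x
    have "((\<lambda>y. I (y + 2*pi)) has_real_derivative h (x + 2*pi)) (at x)"
      using der[of "x + 2*pi"] DERIV_shift by blast
    then show "((\<lambda>y. I (y + 2*pi) - I y) has_real_derivative 0) (at x)"
      using per der by (auto intro!: derivative_eq_intros)
  qed
  from DERIV_isconst_all[OF this, of y 0] show ?thesis by simp
qed

lemma P_pos:
  assumes a: "\<alpha> > 0" and t0: "0 < \<theta>" and tp: "\<theta> < theta_plus \<alpha>" and t4: "\<theta> < pi / 4"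
    and x: "\<bar>x\<bar> \<le> 1"
  shows "Pp \<alpha> \<theta> x > 0"
proof -
  define c where "c = cos (2*\<theta>)"
  define S where "S = sin (2*\<theta>)"
  define C where "C = Cc \<alpha> \<theta>"
  have c0: "c > 0" unfolding c_def using t0 t4 by (intro cos_gt_zero_pi) auto
  have key: "2*\<alpha>^2 + c > 1"
  proof (cases "\<alpha> > 1")
    case True
    then have "\<alpha>^2 > 1" by (simp add: one_less_power)
    then show ?thesis using c0 by linarith
  next
    case False
    then have tpd: "theta_plus \<alpha> = arccos (1 - 2*\<alpha>^2) / 2" by (simp add: theta_plus_def)
    have a2: "\<alpha>^2 \<le> 1" using False a by (simp add: power_le_one)
    have b1: "-1 \<le> 1 - 2*\<alpha>^2" "1 - 2*\<alpha>^2 \<le> 1" using a2 by auto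
    have "cos (arccos (1 - 2*\<alpha>^2)) < cos (2*\<theta>)"
      using tp tpd t0 arccos_ubound[OF b1] by (intro cos_monotone_0_pi) auto
    then show ?thesis using cos_arccos[OF b1] unfolding c_def by linarith
  qed
  have C2: "C^2 = S^2 / (4*\<alpha>^2)" unfolding C_def S_def Cc_def by (simp add: power_divide power_mult_distrib)
  have S2: "S^2 = 1 - c^2" unfolding S_def c_def using sin_cos_squared_add[of "2*\<theta>"] by linarith
  have k2: "\<alpha>^2 + c - C^2 > 0"
  proof -
    have "(2*\<alpha>^2 + c)^2 > 1" using key c0 a
      by (metis less_1_mult nless_le not_less_iff_gr_or_eq one_less_power power_one_over power2_eq_square zero_less_numeral)
    then have "4*\<alpha>^2*(\<alpha>^2 + c) - S^2 > 0" unfolding S2 by (simp add: power2_eq_square algebra_simps)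
    moreover have "4*\<alpha>^2*(\<alpha>^2 + c - C^2) = 4*\<alpha>^2*(\<alpha>^2 + c) - S^2" using a unfolding C2 by (simp add: field_simps)
    ultimately show ?thesis using a by (metis zero_less_mult_pos mult_pos_pos zero_less_numeral zero_less_power)
  qed
  define t where "t = x^2"
  have t01: "0 \<le> t" "t \<le> 1" using x unfolding t_def by (auto simp: abs_square_le_1)
  have x4: "x^4 = t^2" unfolding t_def by simp
  have tt: "t^2 \<le> t" using t01 by (simp add: power2_eq_square mult_left_le_one_le)
  have "Pp \<alpha> \<theta> x = \<alpha>^2 + c*t - C^2*t^2" unfolding Pp_def c_def C_def t_def by simp
  also have "\<dots> \<ge> \<alpha>^2 + (c - C^2)*t"
    using mult_left_mono[OF tt, of "C^2"] by (simp add: algebra_simps)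
  finally have P1: "Pp \<alpha> \<theta> x \<ge> \<alpha>^2 + (c - C^2)*t" .
  show ?thesis
  proof (cases "c - C^2 \<ge> 0")
    case True
    then have "(c - C^2)*t \<ge> 0" using t01 by simp
    then show ?thesis using P1 a by (smt (verit) zero_less_power)
  next
    case False
    then have "(c - C^2)*t \<ge> (c - C^2)" using t01 by (simp add: mult_le_cancel_left1)
    then show ?thesis using P1 k2 by linarith
  qed
qed

lemma cos_cov_gen:
  fixes K f :: "real \<Rightarrow> real"
  assumes cK: "continuous_on {a..b} K" and inj: "inj_on cos {a<..<b}"
    and img: "cos ` {a<..<b} = {-1<..<1}"
    and Keq: "\<And>t. t \<in> {a<..<b} \<Longrightarrow> K t = \<bar>sin t\<bar> * f (cos t)"
  shows "(K has_integral integral {-1..1} f) {a..b}"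
proof -
  have "K absolutely_integrable_on {a..b}" by (rule absolutely_integrable_continuous_real[OF cK])
  then have aK: "K absolutely_integrable_on {a<..<b}"
    using absolutely_integrable_on_open_interval[where f=K and a=a and b=b] unfolding box_real by blast
  have eqS: "(\<lambda>x. \<bar>- sin x\<bar> * f (cos x)) absolutely_integrable_on {a<..<b} \<longleftrightarrow> K absolutely_integrable_on {a<..<b}"
    by (rule absolutely_integrable_spike_eq[where S="{}"]) (auto simp: Keq)
  have eqI: "integral {a<..<b} (\<lambda>x. \<bar>- sin x\<bar> * f (cos x)) = integral {a<..<b} K"
    by (rule integral_cong) (auto simp: Keq)
  have der: "\<And>x. x \<in> {a<..<b} \<Longrightarrow> (cos has_field_derivative - sin x) (at x within {a<..<b})"
    by (auto intro!: derivative_eq_intros)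
  have "f absolutely_integrable_on (cos ` {a<..<b}) \<and> integral (cos ` {a<..<b}) f = integral {a<..<b} K"
    using has_absolute_integral_change_of_variables_1'[OF _ der inj, of f "integral {a<..<b} K"]
      aK eqS eqI by auto
  then have "integral {-1<..<1} f = integral {a<..<b} K" using img by simp
  then have "integral {a..b} K = integral {-1..1} f" by (simp add: integral_open_interval_real)
  moreover have "K integrable_on {a..b}" by (rule integrable_continuous_real[OF cK])
  ultimately show ?thesis by (metis has_integral_integrable_integral)
qed

lemma cos_img1: "cos ` {0<..<pi} = {-1<..<1}"
proof
  show "cos ` {0<..<pi} \<subseteq> {-1<..<1}"
  proof
    fix y assume "y \<in> cos ` {0<..<pi}"
    then obtain t where t: "0 < t" "t < pi" "y = cos t" by auto
    have "cos t < cos 0" using t by (intro cos_monotone_0_pi) auto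
    moreover have "cos pi < cos t" using t by (intro cos_monotone_0_pi) auto
    ultimately show "y \<in> {-1<..<1}" using t by auto
  qed
  show "{-1<..<1} \<subseteq> cos ` {0<..<pi}"
  proof
    fix y :: real assume y: "y \<in> {-1<..<1}"
    then have b: "-1 \<le> y" "y \<le> 1" by auto
    have "arccos y \<noteq> 0" using y cos_arccos[OF b] by force
    moreover have "arccos y \<noteq> pi" using y cos_arccos[OF b] by force
    ultimately have "arccos y \<in> {0<..<pi}" using arccos_bounded[OF b] by auto
    then show "y \<in> cos ` {0<..<pi}" using cos_arccos[OF b] by (metis image_eqI)
  qed
qed

lemma cos_inj1: "inj_on cos {0<..<pi}"
  unfolding inj_on_def by (metis cos_inj_pi greaterThanLessThan_iff less_eq_real_def)

lemma cos_shift: "cos (2*pi - t) = cos t"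
  by (simp add: cos_diff)

lemma cos_img2: "cos ` {pi<..<2*pi} = {-1<..<1}"
proof -
  have "{pi<..<2*pi} = (\<lambda>t. 2*pi - t) ` {0<..<pi}"
  proof
    show "{pi<..<2*pi} \<subseteq> (\<lambda>t. 2*pi - t) ` {0<..<pi}"
    proof
      fix x assume "x \<in> {pi<..<2*pi}"
      then show "x \<in> (\<lambda>t. 2*pi - t) ` {0<..<pi}" by (intro image_eqI[of _ _ "2*pi - x"]) auto
    qed
  qed auto
  then have "cos ` {pi<..<2*pi} = cos ` {0<..<pi}"
    by (simp only: image_image cos_shift)
  then show ?thesis using cos_img1 by simp
qed

lemma cos_inj2: "inj_on cos {pi<..<2*pi}"
proof (rule inj_onI)
  fix x y assume x: "x \<in> {pi<..<2*pi}" and y: "y \<in> {pi<..<2*pi}" and e: "cos x = cos y"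
  have "cos (2*pi - x) = cos (2*pi - y)" using e by (simp add: cos_shift)
  moreover have "0 \<le> 2*pi - x" "2*pi - x \<le> pi" "0 \<le> 2*pi - y" "2*pi - y \<le> pi" using x y by auto
  ultimately have "2*pi - x = 2*pi - y" using cos_inj_pi by blast
  then show "x = y" by simp
qed

lemma gen2_lem: "- (C * (- C * x^2 / S) + \<alpha> * (- (C^2 * x^2 - c) / ((\<alpha> + S) * S)))
        = (2*\<alpha>*C^2*x^2 - \<alpha>*c + C^2*x^2*S) / (S * (\<alpha> + S))"
      if "S > 0" "\<alpha> + S > 0" for x S C c \<alpha> :: real
proof -
  have "S \<noteq> 0" "\<alpha> + S \<noteq> 0" using that by auto
  then have "C * (- C * x^2 / S) = -(C^2*x^2*(\<alpha>+S)) / (S * (\<alpha> + S))"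
    by (simp add: power2_eq_square)
  moreover have "\<alpha> * (- (C^2 * x^2 - c) / ((\<alpha> + S) * S)) = -(\<alpha>*(C^2 * x^2 - c)) / (S * (\<alpha> + S))"
    by (simp add: mult.commute algebra_simps minus_divide_left)
  ultimately have "- (C * (- C * x^2 / S) + \<alpha> * (- (C^2 * x^2 - c) / ((\<alpha> + S) * S)))
     = - (-(C^2*x^2*(\<alpha>+S)) / (S * (\<alpha> + S)) + -(\<alpha>*(C^2 * x^2 - c)) / (S * (\<alpha> + S)))"
    by simp
  also have "\<dots> = (- (-(C^2*x^2*(\<alpha>+S)) + -(\<alpha>*(C^2 * x^2 - c)))) / (S * (\<alpha> + S))"
    by (simp only: add_divide_distrib[symmetric] minus_divide_left)
  also have "- (-(C^2*x^2*(\<alpha>+S)) + -(\<alpha>*(C^2 * x^2 - c))) = 2*\<alpha>*C^2*x^2 - \<alpha>*c + C^2*x^2*S"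
    by (simp add: algebra_simps)
  finally show ?thesis .
qed

theorem proposition5p2:
  fixes \<alpha> \<theta> :: real and \<phi> \<phi>' \<beta> G :: "real \<Rightarrow> real"
  assumes "\<alpha> > 0"
    and "0 < \<theta>" and "\<theta> < theta_plus \<alpha>" and "\<theta> < pi / 4"
    and "Lfun \<alpha> \<theta> = 0"
    and "\<And>u. (\<phi> has_real_derivative \<phi>' u) (at u)"
    and "\<And>u. (\<phi>' u)^2 = Pp \<alpha> \<theta> (cos (\<phi> u))"
    and "\<phi> 0 = 0" and "\<phi>' 0 \<le> 0"
    and "\<And>u. (\<beta> has_real_derivative Cc \<alpha> \<theta> * (cos (\<phi> u))^2) (at u)"
    and "\<beta> 0 = 0"
    and "\<And>u. (G has_real_derivative Gprime \<alpha> \<theta> \<phi> \<phi>' u) (at u)"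
    and "G 0 = 0"
  shows "\<exists>Z::complex. Z \<noteq> 0 \<and> (\<forall>z. Xmap \<alpha> \<theta> \<phi> \<phi>' \<beta> G (z + Z) = Xmap \<alpha> \<theta> \<phi> \<phi>' \<beta> G z)"
proof -
  note a0 = assms(1)
  note phid = assms(6)
  define s where "s y = sqrt (Pp \<alpha> \<theta> (cos y))" for y
  have Ppos: "Pp \<alpha> \<theta> (cos y) > 0" for y
    using P_pos[OF assms(1-4)] abs_cos_le_one by blast
  have spos: "s y > 0" for y using Ppos by (simp add: s_def)
  have s2: "(s y)^2 = Pp \<alpha> \<theta> (cos y)" for y using Ppos by (simp add: s_def less_imp_le)
  have scont: "continuous_on UNIV s"
    unfolding s_def[abs_def] Pp_def by (intro continuous_intros)
  have sper: "s (y + 2*pi) = s y" for y by (simp add: s_def)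
  have nz: "\<phi>' u \<noteq> 0" for u
    using assms(7)[of u] Ppos[of "\<phi> u"] by auto
  have neg0: "\<phi>' 0 < 0" using nz[of 0] assms(9) by linarith
  have neg: "\<phi>' u < 0" for u
  proof (cases u "0::real" rule: linorder_cases)
    case less then show ?thesis using deriv_sign_left[OF phid nz neg0] by blast
  next
    case equal then show ?thesis using neg0 by simp
  next
    case greater then show ?thesis using deriv_sign_right[OF phid nz neg0] by blast
  qed
  have phi'eq: "\<phi>' u = - s (\<phi> u)" for u
  proof -
    have "s (\<phi> u) = sqrt ((\<phi>' u)^2)" using assms(7)[of u] by (simp add: s_def)
    also have "\<dots> = - \<phi>' u" using neg[of u] by simp
    finally show ?thesis by simp
  qed
  have invcont: "continuous_on UNIV (\<lambda>y. 1 / s y)"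
    using scont spos by (intro continuous_intros) (auto simp: less_imp_neq[symmetric])
  obtain Q where Qd: "\<And>y. (Q has_real_derivative 1 / s y) (at y)"
    using exists_antideriv[OF invcont] by blast
  have Qphi: "Q (\<phi> u) = Q 0 - u" for u
  proof -
    have "\<forall>x. ((\<lambda>u. Q (\<phi> u) + u) has_real_derivative 0) (at x)"
    proof
      fix x
      have "((\<lambda>u. Q (\<phi> u)) has_real_derivative (1 / s (\<phi> x)) * \<phi>' x) (at x)"
        by (rule DERIV_chain2[OF Qd phid])
      moreover have "(1 / s (\<phi> x)) * \<phi>' x = -1" using phi'eq[of x] spos[of "\<phi> x"] by simp
      ultimately show "((\<lambda>u. Q (\<phi> u) + u) has_real_derivative 0) (at x)"
        by (auto intro!: derivative_eq_intros)
    qed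
    from DERIV_isconst_all[OF this, of u 0] show ?thesis using assms(8) by simp
  qed
  have Qmono: "Q x < Q y" if "x < y" for x y
  proof (rule DERIV_pos_imp_increasing[OF that])
    fix t show "\<exists>y. DERIV Q t :> y \<and> y > 0"
      using Qd[of t] spos[of t] by (intro exI[of _ "1 / s t"]) simp
  qed
  define T where "T = Q (2*pi) - Q 0"
  have Tpos: "T > 0" using Qmono[of 0 "2*pi"] by (simp add: T_def)
  have Qper: "Q (y + 2*pi) - Q y = T" for y
    unfolding T_def by (rule periodic_incr[OF Qd]) (simp add: sper)
  have phiper: "\<phi> (u + T) = \<phi> u - 2*pi" for u
  proof -
    have e: "Q (\<phi> (u + T)) = Q (\<phi> u - 2*pi)"
    proof -
      have "Q (\<phi> u - 2*pi + 2*pi) - Q (\<phi> u - 2*pi) = T" by (rule Qper)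
      then have "Q (\<phi> u) - Q (\<phi> u - 2*pi) = T" by simp
      then show ?thesis using Qphi[of "u+T"] Qphi[of u] by linarith
    qed
    show ?thesis
    proof (rule ccontr)
      assume "\<phi> (u + T) \<noteq> \<phi> u - 2*pi"
      then consider "\<phi> (u + T) < \<phi> u - 2*pi" | "\<phi> (u + T) > \<phi> u - 2*pi"
        by (meson linorder_neqE_linordered_idom)
      then show False
      proof cases
        case 1 then show False using e Qmono[OF 1] by simp
      next
        case 2 then show False using e Qmono[OF 2] by simp
      qed
    qed
  qed
  have phi'per: "\<phi>' (u + T) = \<phi>' u" for u
    using phi'eq[of "u+T"] phi'eq[of u] sper[of "\<phi> u - 2*pi"] phiper[of u] by simp
  have incr: "\<exists>D. (h has_integral D) {0..2*pi} \<and> (\<forall>u. w (u + T) = w u - D)"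
    if hc: "continuous_on UNIV h" and hp: "\<And>y. h (y + 2*pi) = h y"
      and wd: "\<And>u. (w has_real_derivative h (\<phi> u) * \<phi>' u) (at u)" for h w
  proof -
    obtain I where Id: "\<And>y. (I has_real_derivative h y) (at y)"
      using exists_antideriv[OF hc] by blast
    define D where "D = I (2*pi) - I 0"
    have "(h has_integral (I (2*pi) - I 0)) {0..2*pi}"
      by (rule fundamental_theorem_of_calculus)
         (use Id in \<open>auto simp: has_real_derivative_iff_has_vector_derivative intro: has_vector_derivative_at_within\<close>)
    moreover have "w (u + T) = w u - D" for u
    proof -
      have "\<forall>x. ((\<lambda>u. w u - I (\<phi> u)) has_real_derivative 0) (at x)"
      proof
        fix x
        have "((\<lambda>u. I (\<phi> u)) has_real_derivative h (\<phi> x) * \<phi>' x) (at x)"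
          by (rule DERIV_chain2[OF Id phid])
        then show "((\<lambda>u. w u - I (\<phi> u)) has_real_derivative 0) (at x)"
          using wd[of x] by (auto intro!: derivative_eq_intros)
      qed
      then have k: "w v - I (\<phi> v) = w 0 - I (\<phi> 0)" for v
        using DERIV_isconst_all by blast
      have "I (\<phi> u - 2*pi + 2*pi) - I (\<phi> u - 2*pi) = D"
        unfolding D_def by (rule periodic_incr[OF Id hp])
      then have "I (\<phi> (u + T)) = I (\<phi> u) - D" using phiper[of u] by simp
      then show ?thesis using k[of "u+T"] k[of u] by linarith
    qed
    ultimately show ?thesis unfolding D_def by blast
  qed
  define C where "C = Cc \<alpha> \<theta>"
  define c where "c = cos (2*\<theta>)"
  define hb where "hb y = - C * (cos y)^2 / s y" for y
  define hg where "hg y = - (C^2 * (cos y)^2 - c) / ((\<alpha> + s y) * s y)" for y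
  have sa: "\<alpha> + s y > 0" for y using spos[of y] a0 by linarith
  have hbc: "continuous_on UNIV hb"
    unfolding hb_def[abs_def] using scont spos by (intro continuous_intros) (auto simp: less_imp_neq[symmetric])
  have hgc: "continuous_on UNIV hg"
    unfolding hg_def[abs_def] using scont spos sa
    by (intro continuous_intros) (auto simp: less_imp_neq[symmetric])
  obtain Db where Db: "(hb has_integral Db) {0..2*pi}" and bper: "\<And>u. \<beta> (u + T) = \<beta> u - Db"
  proof -
    have "\<exists>D. (hb has_integral D) {0..2*pi} \<and> (\<forall>u. \<beta> (u + T) = \<beta> u - D)"
    proof (rule incr[OF hbc])
      show "hb (y + 2*pi) = hb y" for y by (simp add: hb_def sper)
      show "(\<beta> has_real_derivative hb (\<phi> u) * \<phi>' u) (at u)" for u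
      proof -
        have "hb (\<phi> u) * \<phi>' u = Cc \<alpha> \<theta> * (cos (\<phi> u))^2"
          using spos[of "\<phi> u"] by (simp add: hb_def phi'eq C_def)
        then show ?thesis using assms(10)[of u] by simp
      qed
    qed
    then show ?thesis using that by blast
  qed
  obtain Dg where Dg: "(hg has_integral Dg) {0..2*pi}" and gper: "\<And>u. G (u + T) = G u - Dg"
  proof -
    have "\<exists>D. (hg has_integral D) {0..2*pi} \<and> (\<forall>u. G (u + T) = G u - D)"
    proof (rule incr[OF hgc])
      show "hg (y + 2*pi) = hg y" for y by (simp add: hg_def sper)
      show "(G has_real_derivative hg (\<phi> u) * \<phi>' u) (at u)" for u
      proof -
        have gen: "- x / (a * b) * (- b) = x / a" if "a \<noteq> 0" "b \<noteq> 0" for x a b :: real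
          using that by (simp add: field_simps)
        have "hg (\<phi> u) * \<phi>' u = (C^2 * (cos (\<phi> u))^2 - c) / (\<alpha> + s (\<phi> u))"
          unfolding hg_def phi'eq by (rule gen) (use spos[of "\<phi> u"] sa[of "\<phi> u"] in auto)
        also have "\<dots> = Gprime \<alpha> \<theta> \<phi> \<phi>' u"
          by (simp add: Gprime_def phi'eq C_def c_def)
        finally have "hg (\<phi> u) * \<phi>' u = Gprime \<alpha> \<theta> \<phi> \<phi>' u" .
        then show ?thesis using assms(12)[of u] by simp
      qed
    qed
    then show ?thesis using that by blast
  qed
  define K where "K y = - (C * hb y + \<alpha> * hg y)" for y
  define Lint where "Lint = (\<lambda>x. (2 * \<alpha> * (Cc \<alpha> \<theta>)^2 * x^2 - \<alpha> * cos (2 * \<theta>)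
       + (Cc \<alpha> \<theta>)^2 * x^2 * sqrt (Pp \<alpha> \<theta> x))
     / (sqrt ((1 - x^2) * Pp \<alpha> \<theta> x) * (\<alpha> + sqrt (Pp \<alpha> \<theta> x))))"
  have LL: "Lfun \<alpha> \<theta> = integral {-1..1} Lint" by (simp add: Lfun_def Lint_def)
  have Kc: "continuous_on {a..b} K" for a b
    unfolding K_def[abs_def] using hbc hgc continuous_on_subset
    by (intro continuous_intros) auto
  have Keq: "K t = \<bar>sin t\<bar> * Lint (cos t)" if "sin t \<noteq> 0" for t
  proof -
    have sq: "sqrt ((1 - (cos t)^2) * Pp \<alpha> \<theta> (cos t)) = \<bar>sin t\<bar> * s t"
      by (simp add: s_def real_sqrt_mult sin_squared_eq[symmetric])
    have m0: "\<bar>sin t\<bar> \<noteq> 0" using that by simp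
    have sP: "sqrt (Pp \<alpha> \<theta> (cos t)) = s t" by (simp add: s_def)
    have gen3: "m * (N / (m * S * (\<alpha> + S))) = N / (S * (\<alpha> + S))" if "m \<noteq> 0" for m N S :: real
    proof -
      have "m * (N / (m * S * (\<alpha> + S))) = m * N / (m * (S * (\<alpha> + S)))" by (simp add: mult.assoc)
      also have "\<dots> = N / (S * (\<alpha> + S))" using that by (rule mult_divide_mult_cancel_left)
      finally show ?thesis .
    qed
    have "K t = (2*\<alpha>*C^2*(cos t)^2 - \<alpha>*c + C^2*(cos t)^2* s t) / (s t * (\<alpha> + s t))"
      unfolding K_def hb_def hg_def by (rule gen2_lem) (use spos[of t] sa[of t] in auto)
    also have "\<dots> = \<bar>sin t\<bar> * Lint (cos t)"
      unfolding Lint_def sq sP C_def c_def using gen3[OF m0] by simp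
    finally show ?thesis .
  qed
  have sin1: "sin t \<noteq> 0" if "t \<in> {0<..<pi}" for t
    using that sin_gt_zero[of t] by auto
  have sin2: "sin t \<noteq> 0" if "t \<in> {pi<..<2*pi}" for t
  proof -
    have "sin (t - pi) > 0" using that by (intro sin_gt_zero) auto
    then show ?thesis by (simp add: sin_diff)
  qed
  have K1: "(K has_integral Lfun \<alpha> \<theta>) {0..pi}"
    unfolding LL by (rule cos_cov_gen[OF Kc cos_inj1 cos_img1]) (use Keq sin1 in auto)
  have K2: "(K has_integral Lfun \<alpha> \<theta>) {pi..2*pi}"
    unfolding LL by (rule cos_cov_gen[OF Kc cos_inj2 cos_img2]) (use Keq sin2 in auto)
  have "(K has_integral (Lfun \<alpha> \<theta> + Lfun \<alpha> \<theta>)) {0..2*pi}"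
    by (rule has_integral_combine[OF _ _ K1 K2]) auto
  then have K0: "(K has_integral 0) {0..2*pi}" using assms(5) by simp
  have "((\<lambda>y. C * hb y + \<alpha> * hg y) has_integral (C * Db + \<alpha> * Dg)) {0..2*pi}"
    by (rule has_integral_add[OF has_integral_mult_right[OF Db] has_integral_mult_right[OF Dg]])
  then have "((\<lambda>y. - (C * hb y + \<alpha> * hg y)) has_integral - (C * Db + \<alpha> * Dg)) {0..2*pi}"
    by (rule has_integral_neg)
  then have "(K has_integral - (C * Db + \<alpha> * Dg)) {0..2*pi}"
    unfolding K_def[abs_def] .
  then have "- (C * Db + \<alpha> * Dg) = 0" using K0 by (rule has_integral_unique)
  then have key: "C * Db + \<alpha> * Dg = 0" by simp
  define Z where "Z = Complex T (Db / \<alpha>)"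
  have "Z \<noteq> 0" using Tpos by (auto simp: Z_def complex_eq_iff)
  moreover have "Xmap \<alpha> \<theta> \<phi> \<phi>' \<beta> G (z + Z) = Xmap \<alpha> \<theta> \<phi> \<phi>' \<beta> G z" for z
  proof -
    have re: "Re (z + Z) = Re z + T" and im: "Im (z + Z) = Im z + Db / \<alpha>" by (simp_all add: Z_def)
    have A: "\<alpha> * (Im z + Db / \<alpha>) + \<beta> (Re z + T) = \<alpha> * Im z + \<beta> (Re z)"
    proof -
      have "\<alpha> * (Im z + Db / \<alpha>) = \<alpha> * Im z + Db" using a0 by (simp add: distrib_left)
      then show ?thesis using bper[of "Re z"] by linarith
    qed
    have X2: "Cc \<alpha> \<theta> * (Im z + Db / \<alpha>) - G (Re z + T) = Cc \<alpha> \<theta> * Im z - G (Re z)"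
    proof -
      have "C * Db = - (\<alpha> * Dg)" using key by linarith
      then have "C * (Db / \<alpha>) = - Dg" using a0 by (simp add: times_divide_eq_right)
      moreover have "C * (Im z + Db / \<alpha>) = C * Im z + C * (Db / \<alpha>)" by (simp add: distrib_left)
      ultimately show ?thesis using gper[of "Re z"] unfolding C_def by linarith
    qed
    have cs: "cos (\<phi> (Re z + T)) = cos (\<phi> (Re z))" "sin (\<phi> (Re z + T)) = sin (\<phi> (Re z))"
      by (simp_all add: phiper cos_diff sin_diff)
    have Gp: "Gprime \<alpha> \<theta> \<phi> \<phi>' (Re z + T) = Gprime \<alpha> \<theta> \<phi> \<phi>' (Re z)"
      by (simp add: Gprime_def cs(1) phi'per)
    show ?thesis
      unfolding Xmap_def Let_def re im A X2 Gp cs by (rule refl)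
  qed
  ultimately show ?thesis by blast
qed

end
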